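(* Let $S,T$ be numerical semigroups, $w$ a positive integer and $f$ a polynomial with nonnegative integer coefficients such that $\mathrm H_S(x^w)f(x)=\mathrm H_T(x)$. Let $u$ be the greatest common divisor of the exponents of the monomials occurring in $f$ with nonzero coefficient. If $u\in S$, then there exists a numerical semigroup $U$ such that $T$ is the gluing $T=uU+_{uw}wS$, that is, $T=uU+wS$ and $uw\in uU\cap wS$.
   Context: A numerical semigroup is a submonoid of $(\mathbb N,+)$ with finite complement in $\mathbb N$; $aA=\{ax:x\in A\}$ and $A+B=\{x+y:x\in A,y\in B\}$. $\mathrm H_S(x)=\sum_{s\in S}x^s$. For submonoids $T_1,T_2$ of $\mathbb N$ with $d_i=\gcd(T_i)$, a submonoid $T$ is the gluing $T=T_1+_dT_2$, $d=\mathrm{lcm}(d_1,d_2)$, if $T=T_1+T_2$ and $\mathrm{lcm}(d_1,d_2)\in T_1\cap T_2$. *)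

theory Defs
  imports "HOL-Computational_Algebra.Computational_Algebra"
begin

definition numerical_semigroup :: "nat set \<Rightarrow> bool" where
  "numerical_semigroup S \<longleftrightarrow> 0 \<in> S \<and> (\<forall>a\<in>S. \<forall>b\<in>S. a + b \<in> S) \<and> finite (UNIV - S)"

definition hilb :: "nat set \<Rightarrow> nat fps" where
  "hilb S = Abs_fps (\<lambda>n. if n \<in> S then 1 else 0)"

definition dil :: "nat \<Rightarrow> nat set \<Rightarrow> nat set" where
  "dil a A = (\<lambda>x. a * x) ` A"

definition msum :: "nat set \<Rightarrow> nat set \<Rightarrow> nat set" where
  "msum A B = {x + y | x y. x \<in> A \<and> y \<in> B}"

end

theory Submission
  imports Defs
begin

lemma Gnz:
  assumes "w > 0"
  shows "((hilb S oo fps_X ^ w) $ i \<noteq> 0) \<longleftrightarrow> (\<exists>s\<in>S. i = w * s)"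
proof -
  have pw: "\<And>j. ((fps_X::nat fps) ^ w) ^ j $ i = (if i = w * j then 1 else 0)"
    by (simp only: power_mult[symmetric] fps_X_power_nth)
  have "(hilb S oo fps_X ^ w) $ i = (\<Sum>j=0..i. (if j \<in> S then 1 else 0) * (if i = w * j then 1 else 0))"
    by (simp add: fps_compose_nth pw hilb_def)
  moreover have "(\<Sum>j=0..i. (if j \<in> S then 1 else 0) * (if i = w * j then 1 else 0) :: nat) \<noteq> 0
      \<longleftrightarrow> (\<exists>s\<in>S. i = w * s)"
  proof -
    have "(\<Sum>j=0..i. (if j \<in> S then 1 else 0) * (if i = w * j then 1 else 0) :: nat) \<noteq> 0
       \<longleftrightarrow> (\<exists>j\<in>{0..i}. j \<in> S \<and> i = w * j)"
      by (simp add: sum_eq_0_iff) blast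
    also have "\<dots> \<longleftrightarrow> (\<exists>s\<in>S. i = w * s)"
      proof
      assume "\<exists>s\<in>S. i = w * s"
      then obtain s where "s \<in> S" "i = w * s" by blast
      moreover have "s \<le> w * s" using assms by simp
      ultimately show "\<exists>j\<in>{0..i}. j \<in> S \<and> i = w * j" by auto
    qed auto
    finally show ?thesis .
  qed
  ultimately show ?thesis by simp
qed

lemma Tchar:
  assumes "w > 0" and "(hilb S oo fps_X ^ w) * fps_of_poly f = hilb T"
  shows "n \<in> T \<longleftrightarrow> (\<exists>a s. coeff f a \<noteq> 0 \<and> s \<in> S \<and> n = a + w * s)"
proof -
  have "n \<in> T \<longleftrightarrow> hilb T $ n \<noteq> 0" by (simp add: hilb_def)
  also have "\<dots> \<longleftrightarrow> (\<Sum>i=0..n. (hilb S oo fps_X ^ w) $ i * coeff f (n - i)) \<noteq> 0"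
    by (simp add: assms(2)[symmetric] fps_mult_nth)
  also have "\<dots> \<longleftrightarrow> (\<exists>i\<in>{0..n}. (hilb S oo fps_X ^ w) $ i \<noteq> 0 \<and> coeff f (n - i) \<noteq> 0)"
    by (simp add: sum_eq_0_iff)
  also have "\<dots> \<longleftrightarrow> (\<exists>i\<in>{0..n}. (\<exists>s\<in>S. i = w * s) \<and> coeff f (n - i) \<noteq> 0)"
    using Gnz[OF assms(1)] by simp
  also have "\<dots> \<longleftrightarrow> (\<exists>a s. coeff f a \<noteq> 0 \<and> s \<in> S \<and> n = a + w * s)"
    apply (rule iffI)
     apply (metis atLeastAtMost_iff le_add_diff_inverse2)
    apply (elim exE conjE)
    apply (rule_tac x="w*s" in bexI) apply auto
    done
  finally show ?thesis .
qed

theorem theorem7: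
  fixes S T :: "nat set" and w :: nat and f :: "nat poly"
  assumes "numerical_semigroup S" and "numerical_semigroup T"
    and "w > 0"
    and "(hilb S oo fps_X ^ w) * fps_of_poly f = hilb T"
    and "u = Gcd {n. coeff f n \<noteq> 0}"
    and "u \<in> S"
  shows "\<exists>U. numerical_semigroup U \<and> T = msum (dil u U) (dil w S)
            \<and> u * w \<in> dil u U \<inter> dil w S"
proof -
  note TC = Tchar[OF assms(3) assms(4)]
  have S0: "0 \<in> S" and Sadd: "\<And>a b. a \<in> S \<Longrightarrow> b \<in> S \<Longrightarrow> a + b \<in> S"
    using assms(1) unfolding numerical_semigroup_def by auto
  have T0: "0 \<in> T" and Tadd: "\<And>a b. a \<in> T \<Longrightarrow> b \<in> T \<Longrightarrow> a + b \<in> T"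
    and Tfin: "finite (UNIV - T)"
    using assms(2) unfolding numerical_semigroup_def by auto
  have udvd: "\<And>a. coeff f a \<noteq> 0 \<Longrightarrow> u dvd a"
    using assms(5) by (simp add: Gcd_dvd)
  have aT: "\<And>a. coeff f a \<noteq> 0 \<Longrightarrow> a \<in> T"
    using TC S0 by fastforce
  have f0: "coeff f 0 \<noteq> 0"
    using TC[of 0] T0 by auto
  have wsT: "\<And>s. s \<in> S \<Longrightarrow> w * s \<in> T"
    using TC f0 by fastforce
  define U where "U = {n. u * n \<in> T}"
  have "numerical_semigroup U"
    unfolding numerical_semigroup_def
  proof (intro conjI ballI)
    show "0 \<in> U" using T0 by (simp add: U_def)
    fix a b assume "a \<in> U" "b \<in> U"
    then show "a + b \<in> U" using Tadd by (simp add: U_def distrib_left)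
  next
    show "finite (UNIV - U)"
    proof (cases "u = 0")
      case True then show ?thesis using T0 by (simp add: U_def)
    next
      case False
      have "UNIV - U = (\<lambda>n. u * n) -` (UNIV - T)" by (auto simp: U_def)
      moreover have "inj (\<lambda>n. u * n)" using False by (simp add: inj_on_def)
      ultimately show ?thesis using Tfin finite_vimageI by metis
    qed
  qed
  moreover have "T = msum (dil u U) (dil w S)"
  proof
    show "T \<subseteq> msum (dil u U) (dil w S)"
    proof
      fix n assume "n \<in> T"
      then obtain a s where a: "coeff f a \<noteq> 0" "s \<in> S" "n = a + w * s" using TC by blast
      obtain m where m: "a = u * m" using udvd[OF a(1)] by blast
      have "m \<in> U" using aT[OF a(1)] m by (simp add: U_def)
      then show "n \<in> msum (dil u U) (dil w S)"
        unfolding msum_def dil_def using a m by blast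
    qed
  next
    show "msum (dil u U) (dil w S) \<subseteq> T"
      unfolding msum_def dil_def U_def using Tadd wsT by auto
  qed
  moreover have "u * w \<in> dil u U \<inter> dil w S"
  proof -
    have "u * w \<in> T" using wsT[OF assms(6)] by (simp add: mult.commute)
    then have "w \<in> U" by (simp add: U_def)
    then show ?thesis unfolding dil_def using assms(6) by (auto simp: mult.commute)
  qed
  ultimately show ?thesis by blast
qed

end
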